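(* Let $A\in SL_d(\mathbb Z)$ be such that no eigenvalue of $A$ is a root of unity and the characteristic polynomial of $A$ is irreducible over $\mathbb Q$. Then there exists a basis $\{v_1,\dots,v_d\}$ of $\mathbb C^d$ such that (1) each $v_i$ is an eigenvector of $A$, and (2) for every $k\in\mathbb Z^d\setminus\{0\}$, if $a_1(k),\dots,a_d(k)\in\mathbb C$ are the coefficients with $k=\sum_{i=1}^d a_i(k)v_i$, then $$\prod_{i=1}^d|a_i(k)|\ge1.$$ *)

theory Defs
  imports "Jordan_Normal_Form.Char_Poly" "HOL-Computational_Algebra.Polynomial_Factorial"
begin

definition lin_comb :: "nat \<Rightarrow> (nat \<Rightarrow> complex) \<Rightarrow> (nat \<Rightarrow> complex vec) \<Rightarrow> complex vec" where
  "lin_comb d a v = vec d (\<lambda>j. \<Sum>i<d. a i * (v i $ j))"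

definition is_basis_Cd :: "nat \<Rightarrow> (nat \<Rightarrow> complex vec) \<Rightarrow> bool" where
  "is_basis_Cd d v \<longleftrightarrow>
     (\<forall>i<d. v i \<in> carrier_vec d) \<and>
     (\<forall>a. lin_comb d a v = 0\<^sub>v d \<longrightarrow> (\<forall>i<d. a i = 0)) \<and>
     (\<forall>w \<in> carrier_vec d. \<exists>a. w = lin_comb d a v)"

end

theory Submission imports Defs "HOL-Computational_Algebra.Field_as_Ring" begin

definition Wm :: "nat \<Rightarrow> (nat \<Rightarrow> 'a vec) \<Rightarrow> 'a mat" where
  "Wm d w = mat d d (\<lambda>(i,j). w i $ j)"
definition Vm :: "nat \<Rightarrow> (nat \<Rightarrow> 'a::comm_ring_1) \<Rightarrow> 'a mat" where
  "Vm d lam = mat d d (\<lambda>(i,j). lam i ^ j)"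
definition Mm :: "'a::comm_ring_1 mat \<Rightarrow> nat \<Rightarrow> 'a vec \<Rightarrow> 'a mat" where
  "Mm X d x = mat d d (\<lambda>(i,j). (X ^\<^sub>m j *\<^sub>v x) $ i)"
definition Dg :: "nat \<Rightarrow> (nat \<Rightarrow> 'a::comm_ring_1) \<Rightarrow> 'a mat" where
  "Dg d a = mat d d (\<lambda>(i,j). if i = j then a i else 0)"

lemma det_Dg: "det (Dg d a) = (\<Prod>i<d. a i)"
proof -
  have "det (Dg d a) = prod_list (diag_mat (Dg d a))"
    by (rule det_upper_triangular[of _ d], auto simp: Dg_def upper_triangular_def)
  also have "\<dots> = (\<Prod>i<d. a i)" unfolding prod_list_diag_prod
    by (auto simp: Dg_def lessThan_atLeast0 intro!: prod.cong)
  finally show ?thesis .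
qed

lemma left_eig_pow:
  fixes X :: "'a::comm_ring_1 mat"
  assumes X: "X \<in> carrier_mat d d" and w: "w \<in> carrier_vec d"
    and ev: "transpose_mat X *\<^sub>v w = l \<cdot>\<^sub>v w" and x: "x \<in> carrier_vec d"
  shows "w \<bullet> (X ^\<^sub>m j *\<^sub>v x) = l ^ j * (w \<bullet> x)"
  using x proof (induction j arbitrary: x)
  case 0
  then show ?case using X by (simp add: one_mult_mat_vec 0)
next
  case (Suc j)
  have "X ^\<^sub>m Suc j *\<^sub>v x = X ^\<^sub>m j *\<^sub>v (X *\<^sub>v x)"
    using X Suc.prems by (simp add: assoc_mult_mat_vec[of _ d d _ d])
  moreover have "w \<bullet> (X *\<^sub>v x) = l * (w \<bullet> x)"
  proof -
    have "w \<bullet> (X *\<^sub>v x) = (transpose_mat X *\<^sub>v w) \<bullet> x"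
      using transpose_vec_mult_scalar[OF X Suc.prems w] by simp
    also have "\<dots> = l * (w \<bullet> x)" using ev w Suc.prems by simp
    finally show ?thesis .
  qed
  moreover have "X *\<^sub>v x \<in> carrier_vec d" using X Suc.prems by simp
  ultimately show ?case using Suc by simp
qed

lemma Dg_Vm: assumes i: "i < d" and j: "j < d"
  shows "(Dg d a * Vm d lam) $$ (i,j) = a i * lam i ^ j"
proof -
  have "(Dg d a * Vm d lam) $$ (i,j) = (\<Sum>l\<in>{0..<d}. (if i = l then a i else 0) * lam l ^ j)"
    using i j by (simp add: Dg_def Vm_def scalar_prod_def)
  also have "\<dots> = a i * lam i ^ j"
    using i by (subst sum.cong[OF refl, of _ _ "\<lambda>l. if l = i then a i * lam i ^ j else 0"]) auto
  finally show ?thesis .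
qed

lemma WM_eq:
  fixes X :: "'a::comm_ring_1 mat"
  assumes X: "X \<in> carrier_mat d d"
    and w: "\<And>i. i < d \<Longrightarrow> w i \<in> carrier_vec d \<and> transpose_mat X *\<^sub>v w i = lam i \<cdot>\<^sub>v w i"
    and x: "x \<in> carrier_vec d"
  shows "Wm d w * Mm X d x = Dg d (\<lambda>i. w i \<bullet> x) * Vm d lam"
proof (rule eq_matI)
  fix i j assume i: "i < dim_row (Dg d (\<lambda>i. w i \<bullet> x) * Vm d lam)"
    and j: "j < dim_col (Dg d (\<lambda>i. w i \<bullet> x) * Vm d lam)"
  hence i: "i < d" and j: "j < d" by (auto simp: Dg_def Vm_def)
  have r: "row (Wm d w) i = w i" using w[OF i] i by (auto simp: Wm_def)
  have c: "col (Mm X d x) j = X ^\<^sub>m j *\<^sub>v x" using j X by (auto simp: Mm_def)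
  have "(Wm d w * Mm X d x) $$ (i,j) = w i \<bullet> (X ^\<^sub>m j *\<^sub>v x)"
    using i j r c by (simp add: Wm_def Mm_def)
  also have "\<dots> = lam i ^ j * (w i \<bullet> x)"
    using left_eig_pow[OF X _ _ x] w[OF i] by blast
  also have "\<dots> = (Dg d (\<lambda>i. w i \<bullet> x) * Vm d lam) $$ (i,j)"
    using Dg_Vm[OF i j, of "\<lambda>i. w i \<bullet> x" lam] by (simp add: mult.commute)
  finally show "(Wm d w * Mm X d x) $$ (i,j) = (Dg d (\<lambda>i. w i \<bullet> x) * Vm d lam) $$ (i,j)" .
qed (auto simp: Wm_def Mm_def Dg_def Vm_def)

lemma poly_of_vec:
  fixes c :: "'a::comm_ring_1 vec" and d :: nat
  defines "p \<equiv> (\<Sum>j<d. monom (c $ j) j)"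
  shows "poly p z = (\<Sum>j<d. c $ j * z ^ j)"
    and "coeff p n = (if n < d then c $ n else 0)"
    and "degree p \<le> d - 1"
proof -
  show "poly p z = (\<Sum>j<d. c $ j * z ^ j)" unfolding p_def by (simp add: poly_sum poly_monom)
  show "coeff p n = (if n < d then c $ n else 0)" unfolding p_def
    by (simp add: coeff_sum coeff_monom)
  show "degree p \<le> d - 1" unfolding p_def
    by (rule degree_sum_le, auto intro: order.trans[OF degree_monom_le])
qed

lemma det_Vm:
  fixes lam :: "nat \<Rightarrow> complex"
  assumes inj: "inj_on lam {..<d}"
  shows "det (Vm d lam) \<noteq> 0"
proof
  assume "det (Vm d lam) = 0"
  then obtain c where c: "c \<in> carrier_vec d" "c \<noteq> 0\<^sub>v d" "Vm d lam *\<^sub>v c = 0\<^sub>v d"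
    using det_0_iff_vec_prod_zero[of "Vm d lam" d] by (auto simp: Vm_def)
  define p where "p = (\<Sum>j<d. monom (c $ j) j)"
  note pp = poly_of_vec[of c d, folded p_def]
  have roots: "poly p (lam i) = 0" if i: "i < d" for i
  proof -
    have "(Vm d lam *\<^sub>v c) $ i = (\<Sum>j<d. c $ j * lam i ^ j)"
      using i c(1) by (simp add: Vm_def scalar_prod_def lessThan_atLeast0 mult.commute)
    thus ?thesis using c(3) i pp(1) by simp
  qed
  have "p \<noteq> 0"
  proof
    assume "p = 0"
    hence "c $ n = 0" if "n < d" for n using pp(2)[of n] that by simp
    hence "c = 0\<^sub>v d" using c(1) by (intro eq_vecI) auto
    with c(2) show False by simp
  qed
  have d0: "d > 0" using c by (cases d) auto
  have "lam ` {..<d} \<subseteq> {x. poly p x = 0}" using roots by auto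
  hence "card (lam ` {..<d}) \<le> card {x. poly p x = 0}"
    using poly_roots_finite[OF \<open>p \<noteq> 0\<close>] by (intro card_mono) auto
  also have "\<dots> \<le> degree p" using card_poly_roots_bound[OF \<open>p \<noteq> 0\<close>] .
  also have "\<dots> < d" using pp(3) d0 by linarith
  finally show False using card_image[OF inj] by simp
qed

lemma dim_Wm[simp]: "dim_row (Wm d w) = d" "dim_col (Wm d w) = d"
  by (auto simp: Wm_def)

lemma det_Wm:
  fixes X :: "complex mat"
  assumes X: "X \<in> carrier_mat d d" and inj: "inj_on lam {..<d}"
    and w: "\<And>i. i < d \<Longrightarrow> w i \<in> carrier_vec d \<and> w i \<noteq> 0\<^sub>v d \<and> transpose_mat X *\<^sub>v w i = lam i \<cdot>\<^sub>v w i"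
  shows "det (Wm d w) \<noteq> 0"
proof
  have Wc: "Wm d w \<in> carrier_mat d d" by (simp add: Wm_def)
  have rowW: "row (Wm d w) i = w i" if "i < d" for i
    using that w[OF that] by (auto simp: Wm_def)
  assume "det (Wm d w) = 0"
  hence "det (transpose_mat (Wm d w)) = 0" using det_transpose[OF Wc] by simp
  then obtain c where c: "c \<in> carrier_vec d" "c \<noteq> 0\<^sub>v d" "transpose_mat (Wm d w) *\<^sub>v c = 0\<^sub>v d"
    using det_0_iff_vec_prod_zero[of "transpose_mat (Wm d w)" d] Wc by auto
  have key: "c $ i * (w i \<bullet> x) = 0" if x: "x \<in> carrier_vec d" and i: "i < d" for x i
  proof -
    define u where "u = vec d (\<lambda>i. c $ i * (w i \<bullet> x))"
    have u: "u \<in> carrier_vec d" by (simp add: u_def)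
    have Vc: "transpose_mat (Vm d lam) \<in> carrier_mat d d" by (simp add: Vm_def)
    have "transpose_mat (Vm d lam) *\<^sub>v u = 0\<^sub>v d"
    proof (rule eq_vecI)
      fix j assume "j < dim_vec (0\<^sub>v d :: complex vec)"
      hence j: "j < d" by simp
      have y: "X ^\<^sub>m j *\<^sub>v x \<in> carrier_vec d" using X x by (metis mult_mat_vec_carrier pow_carrier_mat)
      have Wy: "Wm d w *\<^sub>v (X ^\<^sub>m j *\<^sub>v x) = vec d (\<lambda>i. w i \<bullet> (X ^\<^sub>m j *\<^sub>v x))"
        by (rule eq_vecI) (auto simp: rowW)
      have "0 = (transpose_mat (Wm d w) *\<^sub>v c) \<bullet> (X ^\<^sub>m j *\<^sub>v x)" using c(3) y by simp
      also have "\<dots> = c \<bullet> (Wm d w *\<^sub>v (X ^\<^sub>m j *\<^sub>v x))"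
        by (rule transpose_vec_mult_scalar[OF Wc y c(1)])
      also have "\<dots> = (\<Sum>i\<in>{0..<d}. c $ i * (w i \<bullet> (X ^\<^sub>m j *\<^sub>v x)))"
        using c(1) by (simp add: Wy scalar_prod_def)
      also have "\<dots> = (\<Sum>i\<in>{0..<d}. lam i ^ j * u $ i)"
        by (rule sum.cong[OF refl], simp add: u_def left_eig_pow[OF X _ _ x] w)
      also have "\<dots> = (transpose_mat (Vm d lam) *\<^sub>v u) $ j"
        using j u by (simp add: Vm_def scalar_prod_def)
      finally show "(transpose_mat (Vm d lam) *\<^sub>v u) $ j = 0\<^sub>v d $ j" using j by simp
    qed (simp add: Vm_def)
    moreover have "det (transpose_mat (Vm d lam)) \<noteq> 0"
      using det_Vm[OF inj] det_transpose[of "Vm d lam" d] by (simp add: Vm_def)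
    ultimately have "u = 0\<^sub>v d" using det_0_iff_vec_prod_zero[OF Vc] u by auto
    thus ?thesis using i by (metis index_vec index_zero_vec(1) u_def)
  qed
  obtain i where i: "i < d" "c $ i \<noteq> 0" using c(1,2) by (metis eq_vecI carrier_vecD index_zero_vec)
  obtain m where m: "m < d" "w i $ m \<noteq> 0" using w[OF i(1)]
    by (metis eq_vecI carrier_vecD index_zero_vec)
  have "c $ i * (w i \<bullet> unit_vec d m) = 0" by (rule key[OF _ i(1)], simp)
  thus False using i m by simp
qed

lemma irr_nonroot:
  fixes f q :: "rat poly" and z :: complex
  assumes irr: "irreducible f" and q0: "q \<noteq> 0" and deg: "degree q < degree f"
    and root: "poly (map_poly of_rat f) z = 0"
  shows "poly (map_poly of_rat q) z \<noteq> 0"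
proof
  assume qz: "poly (map_poly of_rat q) z = 0"
  interpret mh: map_poly_comm_ring_hom "of_rat :: rat \<Rightarrow> complex" ..
  have "\<not> f dvd q" using dvd_imp_degree_le[OF _ q0, of f] deg by linarith
  hence "coprime f q" using irr by (simp add: irreducible_imp_prime_elem_gcd prime_elem_imp_coprime)
  hence g: "gcd f q = 1" by (simp only: coprime_iff_gcd_eq_1)
  define x where "x = fst (bezout_coefficients f q)"
  define y where "y = snd (bezout_coefficients f q)"
  have xy: "x * f + y * q = 1" using bezout_coefficients_fst_snd[of f q] g unfolding x_def y_def by (simp only:)
  have "poly (map_poly (of_rat :: rat \<Rightarrow> complex) (x * f + y * q)) z = 1" unfolding xy by simp
  moreover have "poly (map_poly (of_rat :: rat \<Rightarrow> complex) (x * f + y * q)) z =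
     poly (map_poly of_rat x) z * poly (map_poly of_rat f) z + poly (map_poly of_rat y) z * poly (map_poly of_rat q) z"
    by (simp only: mh.hom_add mh.hom_mult poly_add poly_mult)
  ultimately show False using root qz by simp
qed

lemma Dg_mult_left: assumes M: "M \<in> carrier_mat d n" and i: "i < d" and j: "j < n"
  shows "(Dg d a * M) $$ (i,j) = a i * M $$ (i,j)"
proof -
  have "(Dg d a * M) $$ (i,j) = (\<Sum>l\<in>{0..<d}. (if i = l then a i else 0) * M $$ (l,j))"
    using i j M by (simp add: Dg_def scalar_prod_def)
  also have "\<dots> = a i * M $$ (i,j)"
    using i by (subst sum.cong[OF refl, of _ _ "\<lambda>l. if l = i then a i * M $$ (i,j) else 0"]) auto
  finally show ?thesis .
qed

lemma mult_Dg_right: assumes M: "M \<in> carrier_mat n d" and i: "i < d" and j: "j < n"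
  shows "(M * Dg d a) $$ (j,i) = M $$ (j,i) * a i"
proof -
  have "(M * Dg d a) $$ (j,i) = (\<Sum>l\<in>{0..<d}. M $$ (j,l) * (if l = i then a l else 0))"
    using i j M by (simp add: Dg_def scalar_prod_def)
  also have "\<dots> = M $$ (j,i) * a i"
    using i by (subst sum.cong[OF refl, of _ _ "\<lambda>l. if l = i then M $$ (j,i) * a i else 0"]) auto
  finally show ?thesis .
qed

lemma Dg_mult_vec: assumes y: "y \<in> carrier_vec d" and i: "i < d"
  shows "(Dg d a *\<^sub>v y) $ i = a i * y $ i"
proof -
  have "(Dg d a *\<^sub>v y) $ i = (\<Sum>l\<in>{0..<d}. (if i = l then a i else 0) * y $ l)"
    using i y by (simp add: Dg_def scalar_prod_def)
  also have "\<dots> = a i * y $ i"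
    using i by (subst sum.cong[OF refl, of _ _ "\<lambda>l. if l = i then a i * y $ i else 0"]) auto
  finally show ?thesis .
qed

lemma prod_list_dup: fixes f :: "'b \<Rightarrow> 'a::comm_monoid_mult"
  shows "prod_list (map f (xs @ [u] @ ys @ [u] @ zs)) = f u * f u * prod_list (map f (xs @ ys @ zs))"
  by (simp add: ac_simps)

lemma pderiv_sq_root: fixes g :: "'a::idom poly"
  shows "poly (pderiv ([:-u,1:] * [:-u,1:] * g)) u = 0"
proof -
  have "poly [:-u,1:] u = 0" by simp
  thus ?thesis by (simp only: pderiv_mult poly_add poly_mult) simp
qed

lemma dim_Dg[simp]: "dim_row (Dg d a) = d" "dim_col (Dg d a) = d" by (auto simp: Dg_def)

lemma Dg_carrier[simp]: "Dg d a \<in> carrier_mat d d" by (simp add: Dg_def)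
lemma Vm_carrier[simp]: "Vm d a \<in> carrier_mat d d" by (simp add: Vm_def)
lemma Mm_carrier[simp]: "Mm X d x \<in> carrier_mat d d" by (simp add: Mm_def)
lemma Wm_carrier[simp]: "Wm d w \<in> carrier_mat d d" by (simp add: Wm_def)

theorem lemma4p4:
  fixes A :: "int mat" and d :: nat
  assumes "A \<in> carrier_mat d d"
    and "det A = 1"
    and "\<forall>z. eigenvalue (map_mat complex_of_int A) z \<longrightarrow> \<not> (\<exists>n>0. z ^ n = 1)"
    and "irreducible (char_poly (map_mat rat_of_int A))"
  shows "\<exists>v. is_basis_Cd d v \<and>
           (\<forall>i<d. \<exists>\<mu>. eigenvector (map_mat complex_of_int A) (v i) \<mu>) \<and>
           (\<forall>k \<in> carrier_vec d. k \<noteq> 0\<^sub>v d \<longrightarrow>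
              (\<forall>a. map_vec complex_of_int k = lin_comb d a v \<longrightarrow>
                   (\<Prod>i<d. cmod (a i)) \<ge> 1))"
proof -
  define B where "B = map_mat complex_of_int A"
  define AQ where "AQ = map_mat rat_of_int A"
  define fQ where "fQ = char_poly AQ"
  have Ac: "A \<in> carrier_mat d d" using assms(1) .
  have Bc: "B \<in> carrier_mat d d" using Ac by (simp add: B_def)
  have AQc: "AQ \<in> carrier_mat d d" using Ac by (simp add: AQ_def)
  have BQ: "B = map_mat of_rat AQ" using Ac by (intro eq_matI) (auto simp: B_def AQ_def)
  have fC: "char_poly B = map_poly of_rat fQ" unfolding BQ fQ_def by (rule of_rat_hom.char_poly_hom[OF AQc])
  have degf: "degree fQ = d" and lcf: "coeff fQ d = 1" using degree_monic_char_poly[OF AQc] by (auto simp: fQ_def)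
  have irr: "irreducible fQ" using assms(4) by (simp add: fQ_def AQ_def)
  have d0: "d > 0"
  proof (rule ccontr)
    assume "\<not> d > 0"
    hence "degree fQ = 0" "coeff fQ 0 = 1" using degf lcf by auto
    hence "fQ = 1" by (metis monic_degree_0)
    with irr show False by simp
  qed
  obtain as where as: "char_poly B = (\<Prod>a\<leftarrow>as. [:-a,1:])" "length as = d"
    using char_poly_factorized[OF Bc] by blast
  define lam where "lam i = as ! i" for i
  have root: "poly (char_poly B) (lam i) = 0" if "i < d" for i
    unfolding as(1) lam_def by (rule linear_poly_root, insert that as(2), simp)
  have dist: "distinct as"
  proof (rule ccontr)
    assume "\<not> distinct as"
    from not_distinct_decomp[OF this] obtain xs ys zs u where asd: "as = xs @ [u] @ ys @ [u] @ zs" by blast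
    have "char_poly B = [:-u,1:] * [:-u,1:] * (\<Prod>a\<leftarrow>xs@ys@zs. [:-a,1:])"
      unfolding as(1) asd by (rule prod_list_dup)
    hence "poly (pderiv (char_poly B)) u = 0" by (simp only: pderiv_sq_root)
    moreover have "pderiv (char_poly B) = map_poly of_rat (pderiv fQ)"
      unfolding fC by (simp add: of_rat_hom.map_poly_pderiv)
    moreover have "poly (char_poly B) u = 0" unfolding as(1) asd by (rule linear_poly_root) simp
    moreover have "pderiv fQ \<noteq> 0" using degf d0 by (simp add: pderiv_eq_0_iff)
    moreover have "degree (pderiv fQ) < degree fQ" using degf d0 by (simp add: degree_pderiv)
    ultimately show False using irr_nonroot[OF irr] fC by metis
  qed
  have inj: "inj_on lam {..<d}" using dist as(2) by (auto simp: lam_def inj_on_def nth_eq_iff_index_eq)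
  have evT: "eigenvalue (transpose_mat B) (lam i)" if "i < d" for i
    using root[OF that] Bc by (simp add: eigenvalue_root_char_poly[of _ d])
  define w0 where "w0 i = find_eigenvector (transpose_mat B) (lam i)" for i
  have w0: "w0 i \<in> carrier_vec d \<and> w0 i \<noteq> 0\<^sub>v d \<and> transpose_mat B *\<^sub>v w0 i = lam i \<cdot>\<^sub>v w0 i"
    if "i < d" for i
    using find_eigenvector[of "transpose_mat B" d "lam i", OF _ evT[OF that]] Bc
    by (auto simp: w0_def eigenvector_def)
  have dW0: "det (Wm d w0) \<noteq> 0" by (rule det_Wm[OF Bc inj w0])
  define s where "s = det (Vm d lam) / det (Wm d w0)"
  have s0: "s \<noteq> 0" using det_Vm[OF inj] dW0 by (simp add: s_def)
  define w where "w i = (if i = 0 then s else 1) \<cdot>\<^sub>v w0 i" for i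
  have w: "w i \<in> carrier_vec d \<and> w i \<noteq> 0\<^sub>v d \<and> transpose_mat B *\<^sub>v w i = lam i \<cdot>\<^sub>v w i"
    if i: "i < d" for i
  proof -
    have c: "w0 i \<in> carrier_vec d" using w0[OF i] by simp
    have "transpose_mat B *\<^sub>v w i = (if i = 0 then s else 1) \<cdot>\<^sub>v (lam i \<cdot>\<^sub>v w0 i)"
      unfolding w_def using mult_mat_vec[of "transpose_mat B" d d "w0 i"] Bc c w0[OF i] by simp
    also have "\<dots> = lam i \<cdot>\<^sub>v w i" unfolding w_def by (simp add: smult_smult_assoc mult.commute)
    finally have e: "transpose_mat B *\<^sub>v w i = lam i \<cdot>\<^sub>v w i" .
    obtain m where m: "m < d" "w0 i $ m \<noteq> 0" using w0[OF i]
      by (metis eq_vecI carrier_vecD index_zero_vec)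
    have "w i $ m \<noteq> 0" using m s0 c by (simp add: w_def)
    hence "w i \<noteq> 0\<^sub>v d" using m by auto
    thus ?thesis using e c by (simp add: w_def)
  qed
  define W where "W = Wm d w"
  have Wc: "W \<in> carrier_mat d d" by (simp add: W_def)
  have W0: "W *\<^sub>v 0\<^sub>v d = 0\<^sub>v d" using Wc by (intro eq_vecI) auto
  have Wms: "W = multrow 0 s (Wm d w0)"
    using w0[OF d0] by (intro eq_matI) (auto simp: W_def Wm_def w_def mat_multrow_def)
  have dW: "det W = det (Vm d lam)"
    unfolding Wms det_multrow[OF d0 Wm_carrier] using dW0 by (simp add: s_def)
  have dV: "det (Vm d lam) \<noteq> 0" by (rule det_Vm[OF inj])
  have "W \<in> Units (ring_mat TYPE(complex) d ())"
    by (rule det_non_zero_imp_unit[OF Wc]) (simp add: dW dV)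
  then obtain V where Vc: "V \<in> carrier_mat d d" and VW: "V * W = 1\<^sub>m d" and WV: "W * V = 1\<^sub>m d"
    by (auto simp: Units_def ring_mat_simps)
  define v where "v i = col V i" for i
  have lc: "lin_comb d a v = V *\<^sub>v vec d a" for a
    using Vc by (intro eq_vecI) (auto simp: lin_comb_def v_def scalar_prod_def lessThan_atLeast0 mult.commute)
  have WVx: "W *\<^sub>v (V *\<^sub>v x) = x" if "x \<in> carrier_vec d" for x
    using that Vc Wc WV by (simp add: assoc_mult_mat_vec[symmetric, of W d d V d x])
  have VWx: "V *\<^sub>v (W *\<^sub>v x) = x" if "x \<in> carrier_vec d" for x
    using that Vc Wc VW by (simp add: assoc_mult_mat_vec[symmetric, of V d d W d x])
  have rowW: "row W i = w i" if "i < d" for i using w[OF that] that by (auto simp: W_def Wm_def)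
  have Wx: "W *\<^sub>v x = vec d (\<lambda>i. w i \<bullet> x)" if "x \<in> carrier_vec d" for x
    using Wc by (intro eq_vecI) (auto simp: rowW)
  have WB: "W * B = Dg d lam * W"
  proof (rule eq_matI)
    fix i j assume "i < dim_row (Dg d lam * W)" "j < dim_col (Dg d lam * W)"
    hence i: "i < d" and j: "j < d" using Wc by (auto simp: Dg_def)
    have "(W * B) $$ (i,j) = w i \<bullet> col B j" using i j Wc Bc by (simp add: rowW)
    also have "\<dots> = col B j \<bullet> w i" using w[OF i] Bc by (intro comm_scalar_prod[of _ d]) auto
    also have "\<dots> = (transpose_mat B *\<^sub>v w i) $ j" using j Bc by simp
    also have "\<dots> = lam i * W $$ (i,j)" using w[OF i] i j by (auto simp: W_def Wm_def carrier_vecD)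
    also have "\<dots> = (Dg d lam * W) $$ (i,j)" using Dg_mult_left[OF Wc i j] by simp
    finally show "(W * B) $$ (i,j) = (Dg d lam * W) $$ (i,j)" .
  qed (use Wc Bc in \<open>auto simp: Dg_def\<close>)
  have BV: "B * V = V * Dg d lam"
  proof -
    have "B * V = (V * W) * B * V" using VW Bc Vc by simp
    also have "\<dots> = V * (W * B) * V" using Vc Wc Bc by (simp add: assoc_mult_mat[of V d d W d B d])
    also have "\<dots> = V * (Dg d lam * W) * V" by (simp add: WB)
    also have "\<dots> = (V * Dg d lam * W) * V" using assoc_mult_mat[OF Vc Dg_carrier Wc] by simp
    also have "\<dots> = V * Dg d lam * (W * V)"
      by (rule assoc_mult_mat[OF mult_carrier_mat[OF Vc Dg_carrier] Wc Vc])
    also have "\<dots> = V * Dg d lam" using WV right_mult_one_mat[OF mult_carrier_mat[OF Vc Dg_carrier]] by simp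
    finally show ?thesis .
  qed
  have eig: "eigenvector B (v i) (lam i)" if i: "i < d" for i
  proof -
    have vc: "v i \<in> carrier_vec d" using Vc i by (simp add: v_def)
    have "B *\<^sub>v v i = col (B * V) i" unfolding v_def by (rule col_mult2[symmetric, OF Bc Vc i])
    also have "\<dots> = lam i \<cdot>\<^sub>v v i" unfolding BV
    proof (rule eq_vecI)
      fix j assume "j < dim_vec (lam i \<cdot>\<^sub>v v i)"
      hence j: "j < d" using Vc by (simp add: v_def)
      have "col (V * Dg d lam) i $ j = (V * Dg d lam) $$ (j,i)"
        by (rule index_col) (use Vc i j in auto)
      also have "\<dots> = V $$ (j,i) * lam i" by (rule mult_Dg_right[OF Vc i j])
      also have "\<dots> = (lam i \<cdot>\<^sub>v v i) $ j" using Vc i j by (simp add: v_def mult.commute)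
      finally show "col (V * Dg d lam) i $ j = (lam i \<cdot>\<^sub>v v i) $ j" .
    qed (use Vc in \<open>simp add: v_def\<close>)
    finally have e: "B *\<^sub>v v i = lam i \<cdot>\<^sub>v v i" .
    have "W *\<^sub>v v i = col (W * V) i" unfolding v_def by (rule col_mult2[symmetric, OF Wc Vc i])
    also have "\<dots> = unit_vec d i" using WV i by simp
    finally have u: "W *\<^sub>v v i = unit_vec d i" .
    have "v i \<noteq> 0\<^sub>v d"
    proof
      assume "v i = 0\<^sub>v d"
      hence "(W *\<^sub>v v i) $ i = 0" using Wc i by simp
      thus False using u i by simp
    qed
    thus ?thesis using e vc Bc by (simp add: eigenvector_def)
  qed
  have basis: "is_basis_Cd d v"
    unfolding is_basis_Cd_def
  proof (intro conjI allI impI ballI)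
    fix i assume "i < d" thus "v i \<in> carrier_vec d" using Vc by (simp add: v_def)
  next
    fix a i assume "lin_comb d a v = 0\<^sub>v d" "i < d"
    hence "vec d a = 0\<^sub>v d" using WVx[of "vec d a"] W0 by (simp add: lc)
    thus "a i = 0" using \<open>i < d\<close> by (metis index_vec index_zero_vec(1))
  next
    fix x :: "complex vec" assume x: "x \<in> carrier_vec d"
    have "vec d (\<lambda>i. (W *\<^sub>v x) $ i) = W *\<^sub>v x" using Wc by (intro eq_vecI) auto
    hence "x = lin_comb d (\<lambda>i. (W *\<^sub>v x) $ i) v" using VWx[OF x] by (simp add: lc)
    thus "\<exists>a. x = lin_comb d a v" by blast
  qed
  have MmBA: "Mm B d (map_vec of_int k) = map_mat of_int (Mm A d k)" if k: "k \<in> carrier_vec d" for k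
  proof -
    have pj: "B ^\<^sub>m j *\<^sub>v map_vec of_int k = map_vec of_int (A ^\<^sub>m j *\<^sub>v k)" for j
      unfolding B_def of_int_hom.mat_hom_pow[OF Ac, symmetric]
      by (rule of_int_hom.mult_mat_vec_hom[symmetric, OF pow_carrier_mat[OF Ac] k])
    show ?thesis using Ac by (intro eq_matI) (auto simp: Mm_def pj)
  qed
  have V0: "V *\<^sub>v 0\<^sub>v d = 0\<^sub>v d" using Vc by (intro eq_vecI) auto
  have prodint: "det (Mm A d k) \<noteq> 0" if k: "k \<in> carrier_vec d" "k \<noteq> 0\<^sub>v d" for k
  proof
    assume "det (Mm A d k) = 0"
    then obtain c where c: "c \<in> carrier_vec d" "c \<noteq> 0\<^sub>v d" "Mm A d k *\<^sub>v c = 0\<^sub>v d"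
      using det_0_iff_vec_prod_zero[OF Mm_carrier] by blast
    define k' where "k' = map_vec complex_of_int k"
    define c' where "c' = map_vec complex_of_int c"
    have k'c: "k' \<in> carrier_vec d" using k by (simp add: k'_def)
    have c'c: "c' \<in> carrier_vec d" using c by (simp add: c'_def)
    have "Mm B d k' *\<^sub>v c' = map_vec of_int (Mm A d k *\<^sub>v c)"
      unfolding k'_def c'_def MmBA[OF k(1)]
      by (rule of_int_hom.mult_mat_vec_hom[symmetric, OF Mm_carrier c(1)])
    also have "\<dots> = 0\<^sub>v d" unfolding c(3) by simp
    finally have Mc: "Mm B d k' *\<^sub>v c' = 0\<^sub>v d" .
    have "Dg d (\<lambda>i. w i \<bullet> k') *\<^sub>v (Vm d lam *\<^sub>v c') = (Dg d (\<lambda>i. w i \<bullet> k') * Vm d lam) *\<^sub>v c'"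
      by (rule assoc_mult_mat_vec[symmetric, OF Dg_carrier Vm_carrier c'c])
    also have "\<dots> = (W * Mm B d k') *\<^sub>v c'" unfolding W_def using WM_eq[OF Bc _ k'c, of w lam] w by simp
    also have "\<dots> = W *\<^sub>v (Mm B d k' *\<^sub>v c')" by (rule assoc_mult_mat_vec[OF Wc Mm_carrier c'c])
    also have "\<dots> = 0\<^sub>v d" unfolding Mc by (rule W0)
    finally have DV: "Dg d (\<lambda>i. w i \<bullet> k') *\<^sub>v (Vm d lam *\<^sub>v c') = 0\<^sub>v d" .
    define pQ :: "rat poly" where "pQ = (\<Sum>j<d. monom (of_int (c $ j)) j)"
    have cQ: "coeff pQ n = (if n < d then of_int (c $ n) else 0)" for n
      using poly_of_vec(2)[of "map_vec rat_of_int c" d n] c(1) unfolding pQ_def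
      by (auto intro!: sum.cong)
    have pQ0: "pQ \<noteq> 0"
    proof
      assume "pQ = 0"
      hence "c $ n = 0" if "n < d" for n using cQ[of n] that by simp
      hence "c = 0\<^sub>v d" using c(1) by (intro eq_vecI) auto
      with c(2) show False by simp
    qed
    have degQ: "degree pQ < degree fQ"
    proof -
      have "degree pQ \<le> d - 1" unfolding pQ_def
        by (rule degree_sum_le, auto intro: order.trans[OF degree_monom_le])
      thus ?thesis using degf d0 by linarith
    qed
    have pC: "poly (map_poly of_rat pQ) z = (\<Sum>j<d. of_int (c $ j) * z ^ j)" for z :: complex
    proof -
      have "map_poly of_rat pQ = (\<Sum>j<d. monom (c' $ j) j)"
        by (rule poly_eqI) (use c(1) in \<open>simp add: coeff_map_poly cQ coeff_sum coeff_monom c'_def\<close>)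
      thus ?thesis using poly_of_vec(1)[of c' d z] c(1) by (simp add: c'_def)
    qed
    have wk: "w i \<bullet> k' = 0" if i: "i < d" for i
    proof -
      have "(Vm d lam *\<^sub>v c') $ i = (\<Sum>j<d. of_int (c $ j) * lam i ^ j)"
        using i c(1) by (simp add: Vm_def scalar_prod_def lessThan_atLeast0 c'_def mult.commute)
      also have "\<dots> = poly (map_poly of_rat pQ) (lam i)" by (simp add: pC)
      finally have e: "(Vm d lam *\<^sub>v c') $ i = poly (map_poly of_rat pQ) (lam i)" .
      have "poly (map_poly of_rat pQ) (lam i) \<noteq> 0"
        by (rule irr_nonroot[OF irr pQ0 degQ]) (use root[OF i] fC in simp)
      moreover have "(w i \<bullet> k') * (Vm d lam *\<^sub>v c') $ i = 0"
        using Dg_mult_vec[of "Vm d lam *\<^sub>v c'" d i "\<lambda>i. w i \<bullet> k'"] DV i mult_mat_vec_carrier[OF Vm_carrier c'c] by simp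
      ultimately show ?thesis using e by simp
    qed
    have "W *\<^sub>v k' = 0\<^sub>v d" using Wx[OF k'c] wk by (intro eq_vecI) auto
    hence "k' = 0\<^sub>v d" using VWx[OF k'c] V0 by simp
    hence "k = 0\<^sub>v d" unfolding k'_def by simp
    with k(2) show False by simp
  qed
  have prod: "(\<Prod>i<d. cmod (a i)) \<ge> 1"
    if k: "k \<in> carrier_vec d" "k \<noteq> 0\<^sub>v d" and ka: "map_vec complex_of_int k = lin_comb d a v" for k a
  proof -
    define k' where "k' = map_vec complex_of_int k"
    have k'c: "k' \<in> carrier_vec d" using k by (simp add: k'_def)
    have "vec d a = W *\<^sub>v k'" using WVx[of "vec d a"] ka by (simp add: lc k'_def)
    hence ai: "a i = w i \<bullet> k'" if "i < d" for i
    proof -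
      have "a i = vec d a $ i" using that by simp
      also have "\<dots> = (W *\<^sub>v k') $ i" by (simp add: \<open>vec d a = W *\<^sub>v k'\<close>)
      also have "\<dots> = w i \<bullet> k'" using Wx[OF k'c] that by simp
      finally show ?thesis .
    qed
    have "det (Wm d w * Mm B d k') = det (Dg d (\<lambda>i. w i \<bullet> k') * Vm d lam)"
      using WM_eq[OF Bc _ k'c, of w lam] w by simp
    hence "det W * det (Mm B d k') = (\<Prod>i<d. w i \<bullet> k') * det (Vm d lam)"
      unfolding det_mult[OF Wm_carrier Mm_carrier] det_mult[OF Dg_carrier Vm_carrier] det_Dg W_def .
    hence "(\<Prod>i<d. w i \<bullet> k') = det (Mm B d k')" using dW dV by simp
    hence "(\<Prod>i<d. a i) = det (Mm B d k')" using ai by simp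
    also have "Mm B d k' = map_mat of_int (Mm A d k)"
    proof -
      have pj: "B ^\<^sub>m j *\<^sub>v k' = map_vec of_int (A ^\<^sub>m j *\<^sub>v k)" for j
        unfolding B_def k'_def of_int_hom.mat_hom_pow[OF Ac, symmetric]
        by (rule of_int_hom.mult_mat_vec_hom[symmetric, OF pow_carrier_mat[OF Ac] k(1)])
      show ?thesis using Ac by (intro eq_matI) (auto simp: Mm_def pj)
    qed
    also have "det \<dots> = of_int (det (Mm A d k))" by (rule of_int_hom.hom_det)
    finally have e: "(\<Prod>i<d. a i) = of_int (det (Mm A d k))" .
    have "(\<Prod>i<d. cmod (a i)) = cmod (\<Prod>i<d. a i)" by (simp add: prod_norm)
    also have "\<dots> = \<bar>real_of_int (det (Mm A d k))\<bar>" unfolding e by (rule norm_of_int)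
    finally have "(\<Prod>i<d. cmod (a i)) = \<bar>real_of_int (det (Mm A d k))\<bar>" .
    thus ?thesis using prodint[OF k] by linarith
  qed
  show ?thesis
    by (rule exI[of _ v]) (use basis eig prod in \<open>auto simp: B_def\<close>)
qed

end
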